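(* Let $p_1,p_2,q$ be non-negative integers, $k$ an integer and $x_1,x_2\in\mathbb{C}$. Then $$\sum_{l=0}^{q}(-1)^{l}B^{(k)}_{p_1+l,p_2}(x_1,x_2)\,\frac{1}{l!}\frac{d^{l}}{dx_1^{l}}\prod_{i=0}^{q-1}(x_1+i)=\sum_{l=0}^{q}(-1)^{l}B^{(k)}_{p_1,p_2+l}(x_1,x_2)\,\frac{1}{l!}\frac{d^{l}}{dx_2^{l}}\prod_{i=0}^{q-1}(x_2+i)=\sum_{l=0}^{p_1+p_2}S_{1,x_1+q}^{1,x_2+q,p_2}(p_1,l)\frac{(-1)^{l}(l+q)!}{(l+q+1)^{k}}.$$ (Empty products equal $1$.)
   Context: For non-negative integers $p_1,p_2,l$ and $x_1,x_2\in\mathbb{C}$, the generalized Stirling numbers are $$S_{1,x_1}^{1,x_2,p_2}(p_1,l)=\frac{1}{l!}\sum_{j=0}^{l}(-1)^{j}\binom{l}{j}(l-j+x_1)^{p_1}(l-j+x_2)^{p_2}.$$ For an integer $k$, the bi-variate poly-Bernoulli polynomial is $$B^{(k)}_{p_1,p_2}(x_1,x_2)=\sum_{l=0}^{p_1+p_2}S_{1,x_1}^{1,x_2,p_2}(p_1,l)\frac{(-1)^{l}\,l!}{(l+1)^{k}}.$$ *)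

theory Defs
  imports "HOL-Analysis.Analysis"
begin

definition gen_stirling :: "complex \<Rightarrow> complex \<Rightarrow> nat \<Rightarrow> nat \<Rightarrow> nat \<Rightarrow> complex" where
  "gen_stirling x1 x2 p2 p1 l =
     (1 / of_nat (fact l)) *
     (\<Sum>j=0..l. (-1) ^ j * of_nat (l choose j) *
        (of_nat (l - j) + x1) ^ p1 * (of_nat (l - j) + x2) ^ p2)"

definition bipoly_bernoulli :: "int \<Rightarrow> nat \<Rightarrow> nat \<Rightarrow> complex \<Rightarrow> complex \<Rightarrow> complex" where
  "bipoly_bernoulli k p1 p2 x1 x2 =
     (\<Sum>l=0..p1+p2. gen_stirling x1 x2 p2 p1 l *
        ((-1) ^ l * of_nat (fact l) / (of_nat (l + 1)) powi k))"

end

theory Submission imports Defs "HOL-Complex_Analysis.Complex_Analysis" begin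


lemma pascal_alt:
  fixes g :: "nat \<Rightarrow> 'a::comm_ring_1"
  shows "(\<Sum>r\<le>Suc m. (-1)^r * of_nat (Suc m choose r) * g r)
       = (\<Sum>r\<le>m. (-1)^r * of_nat (m choose r) * (g r - g (Suc r)))"
proof -
  have A: "(\<Sum>r\<le>Suc m. (-1)^r * of_nat (m choose r) * g r)
        = g 0 + (\<Sum>r\<le>m. (-1)^(Suc r) * of_nat (m choose Suc r) * g (Suc r))"
    by (subst sum.atMost_Suc_shift) simp
  have B: "(\<Sum>r\<le>Suc m. (-1)^r * of_nat (m choose r) * g r)
        = (\<Sum>r\<le>m. (-1)^r * of_nat (m choose r) * g r)"
    by (simp add: binomial_eq_0)
  have "(\<Sum>r\<le>Suc m. (-1)^r * of_nat (Suc m choose r) * g r)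
     = g 0 + (\<Sum>r\<le>m. (-1)^(Suc r) * of_nat (Suc m choose Suc r) * g (Suc r))"
    by (subst sum.atMost_Suc_shift) simp
  also have "\<dots> = g 0 + (\<Sum>r\<le>m. (-1)^(Suc r) * of_nat (m choose r) * g (Suc r))
        + (\<Sum>r\<le>m. (-1)^(Suc r) * of_nat (m choose Suc r) * g (Suc r))"
    by (simp add: sum.distrib[symmetric] algebra_simps sum_subtractf[symmetric])
  also have "\<dots> = (\<Sum>r\<le>m. (-1)^(Suc r) * of_nat (m choose r) * g (Suc r))
        + (\<Sum>r\<le>m. (-1)^r * of_nat (m choose r) * g r)"
    using A B by simp
  finally show ?thesis by (simp add: sum.distrib[symmetric] algebra_simps sum_subtractf)
qed

lemma degree_shift_diff:
  fixes p :: "'a::idom poly"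
  assumes "degree p > 0"
  shows "degree (p - p \<circ>\<^sub>p [:1,1:]) < degree p"
proof -
  have d: "degree (p \<circ>\<^sub>p [:1,1:]) = degree p" by (simp add: degree_pcompose)
  have l: "lead_coeff (p \<circ>\<^sub>p [:1,1:]) = lead_coeff p" by (simp add: lead_coeff_comp)
  have le: "degree (p - p \<circ>\<^sub>p [:1,1:]) \<le> degree p"
    using degree_diff_le[of p "degree p" "p \<circ>\<^sub>p [:1,1:]"] d by simp
  have c: "coeff (p - p \<circ>\<^sub>p [:1,1:]) (degree p) = 0" using l d by simp
  show ?thesis
  proof (rule ccontr)
    assume "\<not> ?thesis"
    then have e: "degree (p - p \<circ>\<^sub>p [:1,1:]) = degree p" using le by simp
    then have "p - p \<circ>\<^sub>p [:1,1:] \<noteq> 0" using assms by auto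
    then show False using c e by (metis leading_coeff_0_iff)
  qed
qed

lemma alt_sum_poly:
  fixes p :: "'a::{idom,ring_char_0} poly"
  shows "degree p < m \<Longrightarrow> (\<Sum>r\<le>m. (-1)^r * of_nat (m choose r) * poly p (of_nat r)) = 0"
proof (induction m arbitrary: p)
  case 0 then show ?case by simp
next
  case (Suc m)
  have "(\<Sum>r\<le>Suc m. (-1)^r * of_nat (Suc m choose r) * poly p (of_nat r))
     = (\<Sum>r\<le>m. (-1)^r * of_nat (m choose r) * poly (p - p \<circ>\<^sub>p [:1,1:]) (of_nat r))"
    by (subst pascal_alt) (simp add: poly_pcompose algebra_simps)
  also have "\<dots> = 0"
  proof (cases "degree p = 0")
    case True
    then obtain c where "p = [:c:]" by (metis degree_eq_zeroE)
    then show ?thesis by simp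
  next
    case False
    then show ?thesis using degree_shift_diff[of p] Suc by (intro Suc.IH) auto
  qed
  finally show ?case .
qed


lemma deriv_poly_iter: "(deriv ^^ l) (poly p) = poly ((pderiv ^^ l) (p :: complex poly))"
proof (induction l)
  case 0 then show ?case by simp
next
  case (Suc l)
  show ?case by (simp add: Suc fun_eq_iff DERIV_imp_deriv)
qed

definition PP :: "nat \<Rightarrow> complex poly" where "PP q = (\<Prod>i<q. [:of_nat i, 1:])"

lemma poly_PP: "(\<lambda>x. \<Prod>i=0..<q. x + of_nat i) = poly (PP q)"
  by (simp add: PP_def poly_prod fun_eq_iff atLeast0LessThan add.commute)

lemma degree_PP: "degree (PP q) \<le> q"
proof -
  have "degree (PP q) \<le> (\<Sum>i<q. degree [:of_nat i, 1::complex:])"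
    unfolding PP_def by (rule order.trans[OF degree_prod_sum_le]) (auto simp: o_def)
  also have "\<dots> = q" by simp
  finally show ?thesis .
qed

lemma higher_PP_zero: "l > q \<Longrightarrow> (pderiv ^^ l) (PP q) = 0"
proof -
  assume l: "l > q"
  have "coeff ((pderiv ^^ l) (PP q)) n = 0" for n
    using degree_PP[of q] l by (simp add: coeff_higher_pderiv coeff_eq_0)
  then show ?thesis by (simp add: poly_eq_iff)
qed

lemma taylor_PP:
  "(\<Sum>l\<le>q. (deriv ^^ l) (\<lambda>x. \<Prod>i=0..<q. x + of_nat i) (x::complex) / fact l * h^l)
     = (\<Prod>i=0..<q. (x + h) + of_nat i)"
proof -
  let ?f = "\<lambda>x::complex. \<Prod>i=0..<q. x + of_nat i"
  have hol: "?f holomorphic_on ball x (norm h + 1)" by (intro holomorphic_intros)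
  have w: "x + h \<in> ball x (norm h + 1)" by (simp add: dist_norm)
  have S: "(\<lambda>n. (deriv ^^ n) ?f x / fact n * (x + h - x)^n) sums ?f (x + h)"
    by (rule holomorphic_power_series[OF hol w])
  have F: "(\<lambda>n. (deriv ^^ n) ?f x / fact n * (x + h - x)^n) sums
          (\<Sum>n\<in>{..q}. (deriv ^^ n) ?f x / fact n * (x + h - x)^n)"
    by (rule sums_finite) (auto simp: poly_PP deriv_poly_iter higher_PP_zero)
  from sums_unique2[OF F S] show ?thesis by simp
qed

definition gg :: "complex \<Rightarrow> complex \<Rightarrow> nat \<Rightarrow> nat \<Rightarrow> nat \<Rightarrow> complex" where
  "gg x1 x2 a b r = (of_nat r + x1)^a * (of_nat r + x2)^b"
definition GG :: "complex \<Rightarrow> complex \<Rightarrow> nat \<Rightarrow> nat \<Rightarrow> nat \<Rightarrow> complex" where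
  "GG x1 x2 a b m = (\<Sum>r\<le>m. (-1)^r * of_nat (m choose r) * gg x1 x2 a b r)"

lemma neg1_pow_diff: "r \<le> m \<Longrightarrow> (-1::complex)^m * (-1)^(m-r) = (-1)^r"
proof -
  assume "r \<le> m"
  then obtain d where m: "m = r + d" using le_Suc_ex by blast
  have "(-1::complex)^d * (-1)^d = 1" by (simp add: power_add[symmetric] mult_2[symmetric])
  then show ?thesis by (simp add: m power_add)
qed

lemma gs_GG:
  "gen_stirling x1 x2 p2 p1 m * (-1)^m * of_nat (fact m) = GG x1 x2 p1 p2 m"
proof -
  have "(\<Sum>j=0..m. (-1) ^ j * of_nat (m choose j) *
        (of_nat (m - j) + x1) ^ p1 * (of_nat (m - j) + x2) ^ p2)
      = (\<Sum>r=0..m. (-1) ^ (m-r) * of_nat (m choose r) * gg x1 x2 p1 p2 r)"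
    by (subst sum.atLeastAtMost_rev) (auto intro!: sum.cong simp: gg_def binomial_symmetric[symmetric])
  then have "gen_stirling x1 x2 p2 p1 m * (-1)^m * of_nat (fact m)
      = (-1)^m * (\<Sum>r=0..m. (-1) ^ (m-r) * of_nat (m choose r) * gg x1 x2 p1 p2 r)"
    by (simp add: gen_stirling_def)
  also have "\<dots> = GG x1 x2 p1 p2 m"
    unfolding GG_def sum_distrib_left atLeast0AtMost
    by (rule sum.cong) (auto simp: mult.assoc[symmetric] neg1_pow_diff)
  finally show ?thesis .
qed

lemma GG_vanish: "a + b < m \<Longrightarrow> GG x1 x2 a b m = 0"
proof -
  assume m: "a + b < m"
  let ?p = "[:x1, 1:]^a * [:x2, 1:]^b"
  have "degree ?p \<le> a + b"
    by (rule order.trans[OF degree_mult_le]) (intro add_mono order.trans[OF degree_power_le]; simp)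
  then have "(\<Sum>r\<le>m. (-1)^r * of_nat (m choose r) * poly ?p (of_nat r)) = 0"
    using m by (intro alt_sum_poly) auto
  then show ?thesis by (simp add: GG_def gg_def poly_power add.commute)
qed

lemma bb_GG:
  assumes "a + b \<le> D"
  shows "bipoly_bernoulli k a b x1 x2 = (\<Sum>m\<le>D. GG x1 x2 a b m / (of_nat (m + 1)) powi k)"
proof -
  have "bipoly_bernoulli k a b x1 x2 = (\<Sum>m\<le>a+b. GG x1 x2 a b m / (of_nat (m + 1)) powi k)"
    unfolding bipoly_bernoulli_def atLeast0AtMost
    by (rule sum.cong) (auto simp: gs_GG[symmetric] mult.assoc times_divide_eq_right)
  also have "\<dots> = (\<Sum>m\<le>D. GG x1 x2 a b m / (of_nat (m + 1)) powi k)"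
    using assms by (intro sum.mono_neutral_left) (auto simp: GG_vanish)
  finally show ?thesis .
qed

lemma E_val: "(\<Prod>i=0..<q. (of_nat i - of_nat (s+q)) :: complex) = (-1)^q * fact (s+q) / fact s"
proof (induction q arbitrary: s)
  case 0 then show ?case by simp
next
  case (Suc q)
  have "(\<Prod>i=0..<Suc q. (of_nat i - of_nat (s + Suc q)) :: complex)
      = (\<Prod>i=0..<q. (of_nat i - of_nat (Suc s + q))) * (of_nat q - of_nat (s + Suc q))"
    by simp
  also have "\<dots> = (-1)^q * fact (Suc s + q) / fact (Suc s) * (- of_nat (Suc s))"
    by (simp only: Suc.IH) simp
  also have "\<dots> = (-1)^Suc q * fact (s + Suc q) / fact s"
    by (simp add: fact_Suc field_simps del: of_nat_Suc)
  finally show ?case .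
qed

lemma E_zero: "r < q \<Longrightarrow> (\<Prod>i=0..<q. (of_nat i - of_nat r) :: complex) = 0"
  by (subst prod_zero_iff) auto

lemma shift_sum:
  fixes F :: "nat \<Rightarrow> 'a::comm_monoid_add"
  assumes "\<And>m. m < q \<Longrightarrow> F m = 0"
  shows "(\<Sum>m\<le>n+q. F m) = (\<Sum>m\<le>n. F (m+q))"
proof -
  have "(\<Sum>m\<le>n. F (m+q)) = (\<Sum>m\<in>(\<lambda>m. m+q) ` {..n}. F m)"
    by (subst sum.reindex) (auto simp: inj_on_def)
  also have "\<dots> = (\<Sum>m\<le>n+q. F m)"
  proof (rule sum.mono_neutral_left)
    show "\<forall>i\<in>{..n + q} - (\<lambda>m. m + q) ` {..n}. F i = 0"
    proof
      fix i assume i: "i \<in> {..n + q} - (\<lambda>m. m + q) ` {..n}"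
      have "i < q"
      proof (rule ccontr)
        assume "\<not> i < q"
        then have "i = (i - q) + q" "i - q \<le> n" using i by auto
        then show False using i by blast
      qed
      then show "F i = 0" by (rule assms)
    qed
  qed auto
  finally show ?thesis by simp
qed


definition EE :: "nat \<Rightarrow> nat \<Rightarrow> complex" where
  "EE q r = (\<Prod>i=0..<q. (of_nat i - of_nat r))"

definition MM :: "int \<Rightarrow> nat \<Rightarrow> complex \<Rightarrow> complex \<Rightarrow> nat \<Rightarrow> nat \<Rightarrow> complex" where
  "MM k q x1 x2 p1 p2 = (\<Sum>m\<le>p1+p2+q.
     (\<Sum>r\<le>m. (-1)^r * of_nat (m choose r) * gg x1 x2 p1 p2 r * EE q r) / (of_nat (m+1)) powi k)"

lemma gg_shift: "gg x1 x2 (p1+l) p2 r = gg x1 x2 p1 p2 r * (of_nat r + x1)^l"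
  by (simp add: gg_def power_add mult_ac)

lemma step1:
  fixes W :: "nat \<Rightarrow> complex"
  shows "(-1) ^ l * (\<Sum>m\<le>D. GG x1 x2 (p1+l) p2 m / W m) * c
    = (\<Sum>m\<le>D. \<Sum>r\<le>m. (-1)^r * of_nat (m choose r) * gg x1 x2 p1 p2 r / W m
                 * (c * ((-1)^l * (of_nat r + x1)^l)))"
  unfolding GG_def sum_distrib_left sum_distrib_right sum_divide_distrib
  apply (intro sum.cong refl)
  apply (simp only: gg_shift)
  apply (simp only: divide_inverse mult_ac)
  done

lemma side_eq:
  "(\<Sum>l=0..q. (-1) ^ l * bipoly_bernoulli k (p1 + l) p2 x1 x2 *
            ((1 / of_nat (fact l)) * (deriv ^^ l) (\<lambda>x. \<Prod>i=0..<q. x + of_nat i) x1))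
   = MM k q x1 x2 p1 p2"
proof -
  define D where "D = p1 + p2 + q"
  define c where "c l = (1 / of_nat (fact l)) * (deriv ^^ l) (\<lambda>x. \<Prod>i=0..<q. x + of_nat i) x1" for l
  define W where "W m = (of_nat (m+1) :: complex) powi k" for m
  define T where "T m r l = (-1)^r * of_nat (m choose r) * gg x1 x2 p1 p2 r / W m
                 * (c l * ((-1)^l * (of_nat r + x1)^l))" for m r l
  have "(\<Sum>l=0..q. (-1) ^ l * bipoly_bernoulli k (p1 + l) p2 x1 x2 * c l)
      = (\<Sum>l\<le>q. \<Sum>m\<le>D. \<Sum>r\<le>m. T m r l)"
    unfolding atLeast0AtMost
  proof (rule sum.cong[OF refl])
    fix l assume l: "l \<in> {..q}"
    have bb: "bipoly_bernoulli k (p1 + l) p2 x1 x2 = (\<Sum>m\<le>D. GG x1 x2 (p1+l) p2 m / W m)"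
      using l bb_GG[of "p1+l" p2 D k x1 x2] by (auto simp: D_def W_def)
    show "(-1) ^ l * bipoly_bernoulli k (p1 + l) p2 x1 x2 * c l = (\<Sum>m\<le>D. \<Sum>r\<le>m. T m r l)"
      unfolding bb T_def by (rule step1)
  qed
  also have "\<dots> = (\<Sum>m\<le>D. \<Sum>l\<le>q. \<Sum>r\<le>m. T m r l)" by (rule sum.swap)
  also have "\<dots> = (\<Sum>m\<le>D. \<Sum>r\<le>m. \<Sum>l\<le>q. T m r l)" by (intro sum.cong refl sum.swap)
  also have "\<dots> = MM k q x1 x2 p1 p2"
    unfolding MM_def D_def sum_divide_distrib
  proof (intro sum.cong refl)
    fix m r
    have "(\<Sum>l\<le>q. c l * (- (of_nat r + x1))^l) = (\<Prod>i=0..<q. (x1 + - (of_nat r + x1)) + of_nat i)"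
      using taylor_PP[of q x1 "- (of_nat r + x1)"] unfolding c_def by (simp add: field_simps)
    also have "\<dots> = EE q r" by (simp add: EE_def)
    finally have t: "(\<Sum>l\<le>q. c l * (- (of_nat r + x1))^l) = EE q r" .
    have t2: "(\<Sum>l\<le>q. c l * ((-1)^l * (of_nat r + x1)^l)) = EE q r"
      unfolding t[symmetric] by (intro sum.cong refl) (simp only: power_minus[symmetric])
    show "(\<Sum>l\<le>q. T m r l) = (-1)^r * of_nat (m choose r) * gg x1 x2 p1 p2 r * EE q r / (of_nat (m+1)) powi k"
      unfolding T_def sum_distrib_left[symmetric] t2 W_def by simp
  qed
  finally show ?thesis unfolding c_def .
qed



lemma key_term:
  assumes "s \<le> n"
  shows "(-1::complex)^(s+q) * of_nat ((n+q) choose (s+q)) * g * ((-1)^q * fact (s+q) / fact s)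
       = fact (n+q) / fact n * ((-1)^s * of_nat (n choose s) * g)"
proof -
  have qq: "(-1::complex)^q * (-1)^q = 1" by (simp add: power_add[symmetric] mult_2[symmetric])
  have s: "(-1::complex)^(s+q) * (-1)^q = (-1)^s"
    by (simp add: power_add mult.assoc qq)
  have b1: "(of_nat ((n+q) choose (s+q)) :: complex) = fact (n+q) / (fact (s+q) * fact (n - s))"
    using assms by (simp add: binomial_fact)
  have b2: "(of_nat (n choose s) :: complex) = fact n / (fact s * fact (n - s))"
    using assms by (simp add: binomial_fact)
  have "(-1::complex)^(s+q) * of_nat ((n+q) choose (s+q)) * g * ((-1)^q * fact (s+q) / fact s)
      = ((-1)^(s+q) * (-1)^q) * g * (of_nat ((n+q) choose (s+q)) * fact (s+q) / fact s)"
    by (simp add: mult_ac)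
  also have "\<dots> = (-1)^s * g * (fact (n+q) / (fact s * fact (n - s)))"
    unfolding s b1 by simp
  also have "\<dots> = fact (n+q) / fact n * ((-1)^s * of_nat (n choose s) * g)"
    unfolding b2 by (simp add: field_simps)
  finally show ?thesis .
qed

lemma MM_R:
  "MM k q x1 x2 p1 p2 = (\<Sum>l=0..p1+p2. gen_stirling (x1 + of_nat q) (x2 + of_nat q) p2 p1 l *
            ((-1) ^ l * of_nat (fact (l + q)) / (of_nat (l + q + 1)) powi k))"
proof -
  define A where "A m r = (-1)^r * of_nat (m choose r) * gg x1 x2 p1 p2 r * EE q r" for m r
  define F where "F m = (\<Sum>r\<le>m. A m r) / (of_nat (m+1) :: complex) powi k" for m
  have MM: "MM k q x1 x2 p1 p2 = (\<Sum>m\<le>p1+p2+q. F m)"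
    by (simp add: MM_def F_def A_def)
  have F0: "F m = 0" if "m < q" for m
    using that by (auto simp: F_def A_def EE_def E_zero intro!: sum.neutral)
  have "MM k q x1 x2 p1 p2 = (\<Sum>m\<le>p1+p2. F (m+q))"
    unfolding MM by (rule shift_sum) (rule F0)
  also have "\<dots> = (\<Sum>l=0..p1+p2. gen_stirling (x1 + of_nat q) (x2 + of_nat q) p2 p1 l *
            ((-1) ^ l * of_nat (fact (l + q)) / (of_nat (l + q + 1)) powi k))"
    unfolding atLeast0AtMost
  proof (rule sum.cong[OF refl])
    fix n assume "n \<in> {..p1+p2}"
    have A0: "A (n+q) r = 0" if "r < q" for r
      using that by (simp add: A_def EE_def E_zero)
    have "(\<Sum>r\<le>n+q. A (n+q) r) = (\<Sum>s\<le>n. A (n+q) (s+q))"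
      by (rule shift_sum) (rule A0)
    also have "\<dots> = fact (n+q) / fact n * (\<Sum>s\<le>n. (-1)^s * of_nat (n choose s) * gg x1 x2 p1 p2 (s+q))"
      unfolding sum_distrib_left
    proof (rule sum.cong[OF refl])
      fix s assume "s \<in> {..n}"
      then have sn: "s \<le> n" by simp
      have "EE q (s+q) = (-1)^q * fact (s+q) / fact s"
        unfolding EE_def by (rule E_val)
      then show "A (n+q) (s+q) = fact (n+q) / fact n * ((-1)^s * of_nat (n choose s) * gg x1 x2 p1 p2 (s+q))"
        unfolding A_def using key_term[OF sn, of q "gg x1 x2 p1 p2 (s+q)"] by simp
    qed
    also have "(\<Sum>s\<le>n. (-1)^s * of_nat (n choose s) * gg x1 x2 p1 p2 (s+q)) = GG (x1 + of_nat q) (x2 + of_nat q) p1 p2 n"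
      unfolding GG_def by (intro sum.cong refl) (simp add: gg_def add_ac)
    also have "\<dots> = gen_stirling (x1 + of_nat q) (x2 + of_nat q) p2 p1 n * (-1)^n * of_nat (fact n)"
      by (rule gs_GG[symmetric])
    finally have e: "(\<Sum>r\<le>n+q. A (n+q) r) = fact (n+q) / fact n * (gen_stirling (x1 + of_nat q) (x2 + of_nat q) p2 p1 n * (-1)^n * of_nat (fact n))" .
    show "F (n+q) = gen_stirling (x1 + of_nat q) (x2 + of_nat q) p2 p1 n *
            ((-1) ^ n * of_nat (fact (n + q)) / (of_nat (n + q + 1)) powi k)"
      unfolding F_def e by (simp add: field_simps add_ac)
  qed
  finally show ?thesis .
qed


lemma gs_sym: "gen_stirling x1 x2 b a m = gen_stirling x2 x1 a b m"
  unfolding gen_stirling_def by (simp add: mult_ac)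

lemma bb_sym: "bipoly_bernoulli k a b x1 x2 = bipoly_bernoulli k b a x2 x1"
  unfolding bipoly_bernoulli_def by (simp add: gs_sym add.commute)

lemma MM_sym: "MM k q x1 x2 p1 p2 = MM k q x2 x1 p2 p1"
  unfolding MM_def gg_def by (simp add: mult_ac add_ac)

theorem proposition4p1:
  fixes p1 p2 q :: nat and k :: int and x1 x2 :: complex
  shows "(\<Sum>l=0..q. (-1) ^ l * bipoly_bernoulli k (p1 + l) p2 x1 x2 *
            ((1 / of_nat (fact l)) * (deriv ^^ l) (\<lambda>x. \<Prod>i=0..<q. x + of_nat i) x1))
       = (\<Sum>l=0..q. (-1) ^ l * bipoly_bernoulli k p1 (p2 + l) x1 x2 *
            ((1 / of_nat (fact l)) * (deriv ^^ l) (\<lambda>x. \<Prod>i=0..<q. x + of_nat i) x2))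
   \<and> (\<Sum>l=0..q. (-1) ^ l * bipoly_bernoulli k (p1 + l) p2 x1 x2 *
            ((1 / of_nat (fact l)) * (deriv ^^ l) (\<lambda>x. \<Prod>i=0..<q. x + of_nat i) x1))
       = (\<Sum>l=0..p1+p2. gen_stirling (x1 + of_nat q) (x2 + of_nat q) p2 p1 l *
            ((-1) ^ l * of_nat (fact (l + q)) / (of_nat (l + q + 1)) powi k))"
proof
  have "(\<Sum>l=0..q. (-1) ^ l * bipoly_bernoulli k p1 (p2 + l) x1 x2 *
            ((1 / of_nat (fact l)) * (deriv ^^ l) (\<lambda>x. \<Prod>i=0..<q. x + of_nat i) x2))
      = (\<Sum>l=0..q. (-1) ^ l * bipoly_bernoulli k (p2 + l) p1 x2 x1 *
            ((1 / of_nat (fact l)) * (deriv ^^ l) (\<lambda>x. \<Prod>i=0..<q. x + of_nat i) x2))"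
    by (simp only: bb_sym[of k p1])
  also have "\<dots> = MM k q x2 x1 p2 p1" by (rule side_eq)
  also have "\<dots> = MM k q x1 x2 p1 p2" by (rule MM_sym[symmetric])
  finally show "(\<Sum>l=0..q. (-1) ^ l * bipoly_bernoulli k (p1 + l) p2 x1 x2 *
            ((1 / of_nat (fact l)) * (deriv ^^ l) (\<lambda>x. \<Prod>i=0..<q. x + of_nat i) x1))
       = (\<Sum>l=0..q. (-1) ^ l * bipoly_bernoulli k p1 (p2 + l) x1 x2 *
            ((1 / of_nat (fact l)) * (deriv ^^ l) (\<lambda>x. \<Prod>i=0..<q. x + of_nat i) x2))"
    unfolding side_eq by simp
  show "(\<Sum>l=0..q. (-1) ^ l * bipoly_bernoulli k (p1 + l) p2 x1 x2 *
            ((1 / of_nat (fact l)) * (deriv ^^ l) (\<lambda>x. \<Prod>i=0..<q. x + of_nat i) x1))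
       = (\<Sum>l=0..p1+p2. gen_stirling (x1 + of_nat q) (x2 + of_nat q) p2 p1 l *
            ((-1) ^ l * of_nat (fact (l + q)) / (of_nat (l + q + 1)) powi k))"
    unfolding side_eq by (rule MM_R)
qed

end
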